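(* Let $N>1$ and suppose $\tau$ is a linear-fractional self-map of $B_N$ such that $\tau(\lambda e_1)=\lambda e_1$ for every $\lambda\in\mathbb C$ with $|\lambda|=1$, where $e_1=(1,0,\dots,0)$. Then there is an $(N-1)\times(N-1)$ matrix $A'$ such that $\tau(z_1,z_2,\dots,z_N)=(z_1,A'z')$ for all $z\in B_N$, where $z'=(z_2,\dots,z_N)$.
   Context: $B_N$ is the open unit ball of $\mathbb C^N$ with inner product $\langle z,w\rangle=\sum z_j\overline{w_j}$. A linear-fractional self-map of $B_N$ is a map $\tau(z)=\frac{Az+B}{\langle z,C\rangle+d}$ ($A$ an $N\times N$ matrix, $B,C\in\mathbb C^N$, $d\in\mathbb C$) analytic on $B_N$ with $\tau(B_N)\subseteq B_N$; it is analytic on a neighborhood of $\overline{B_N}$. The hypothesis says $\tau$ restricted to the complex line $[e_1]=\{\lambda e_1:\lambda\in\mathbb C\}$ is the identity on $[e_1]\cap\partial B_N$. *)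

theory Defs
  imports Complex_Main
begin

text \<open>Vectors of C^N are modelled as functions nat => complex; coordinate z_(k+1)
  of the paper is z k (indices 0..N-1), coordinates at indices >= N are 0.\<close>

definition cinner :: "nat \<Rightarrow> (nat \<Rightarrow> complex) \<Rightarrow> (nat \<Rightarrow> complex) \<Rightarrow> complex" where
  "cinner N z w = (\<Sum>j<N. z j * cnj (w j))"

definition unit_ballN :: "nat \<Rightarrow> (nat \<Rightarrow> complex) set" where
  "unit_ballN N = {z. (\<forall>j\<ge>N. z j = 0) \<and> (\<Sum>j<N. (cmod (z j))\<^sup>2) < 1}"

definition e1 :: "nat \<Rightarrow> complex" where
  "e1 = (\<lambda>i. if i = 0 then 1 else 0)"

definition lft :: "nat \<Rightarrow> (nat \<Rightarrow> nat \<Rightarrow> complex) \<Rightarrow> (nat \<Rightarrow> complex) \<Rightarrow> (nat \<Rightarrow> complex)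
    \<Rightarrow> complex \<Rightarrow> (nat \<Rightarrow> complex) \<Rightarrow> (nat \<Rightarrow> complex)" where
  "lft N A B C d z = (\<lambda>i. if i < N then ((\<Sum>j<N. A i j * z j) + B i) / (cinner N z C + d) else 0)"

definition lf_selfmap :: "nat \<Rightarrow> ((nat \<Rightarrow> complex) \<Rightarrow> (nat \<Rightarrow> complex)) \<Rightarrow> bool" where
  "lf_selfmap N \<tau> \<longleftrightarrow> (\<exists>A B C d. \<tau> = lft N A B C d
      \<and> (\<forall>z\<in>unit_ballN N. cinner N z C + d \<noteq> 0)
      \<and> (\<forall>z\<in>unit_ballN N. \<tau> z \<in> unit_ballN N))"

end

theory Submission
  imports Defs
begin

lemma sum_e1: "0 < N \<Longrightarrow> (\<Sum>j<N. g j * (l * e1 j)) = l * g 0"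
  by (simp add: e1_def if_distrib cong: if_cong)

lemma cinner_e1: "0 < N \<Longrightarrow> cinner N (\<lambda>i. l * e1 i) C = l * cnj (C 0)"
proof -
  assume "0 < N"
  have "\<And>j. l * e1 j * cnj (C j) = (if j = 0 then l * cnj (C 0) else 0)" by (simp add: e1_def)
  then show ?thesis using \<open>0 < N\<close> by (simp add: cinner_def)
qed

lemma sum_pt:
  fixes k N :: nat and x y :: complex and g :: "nat \<Rightarrow> complex"
  assumes "0 < k" "k < N"
  shows "(\<Sum>j<N. g j * (if j = 0 then x else if j = k then y else 0)) = g 0 * x + g k * y"
proof -
  have eq: "g j * (if j = 0 then x else if j = k then y else 0)
     = (if j = 0 then g 0 * x else 0) + (if j = k then g k * y else 0)" for j using assms by (cases "j = 0"; cases "j = k"; auto)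
  show ?thesis unfolding eq sum.distrib using assms by simp
qed

lemma cinner_pt:
  fixes k N :: nat
  assumes "0 < k" "k < N"
  shows "cinner N (\<lambda>j. if j = 0 then x else if j = k then y else 0) C = x * cnj (C 0) + y * cnj (C k)"
proof -
  have eq: "(if j = 0 then x else if j = k then y else 0) * cnj (C j)
     = (if j = 0 then x * cnj (C 0) else 0) + (if j = k then y * cnj (C k) else 0)" for j using assms by (cases "j = 0"; cases "j = k"; auto)
  show ?thesis unfolding cinner_def eq sum.distrib using assms by simp
qed

lemma norm_pt:
  fixes k N :: nat
  assumes "0 < k" "k < N"
  shows "(\<Sum>j<N. (cmod (if j = 0 then x else if j = k then y else 0))\<^sup>2) = (cmod x)\<^sup>2 + (cmod y)\<^sup>2"
proof -
  have eq: "(cmod (if j = 0 then x else if j = k then y else 0))\<^sup>2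
     = (if j = 0 then (cmod x)\<^sup>2 else 0) + (if j = k then (cmod y)\<^sup>2 else 0)" for j using assms by (cases "j = 0"; cases "j = k"; auto)
  show ?thesis unfolding eq sum.distrib using assms by simp
qed

lemma key:
  fixes p q :: complex and \<sigma> :: real
  assumes sg: "\<sigma>\<^sup>2 = 1"
    and H: "\<forall>s. 0 < s \<and> s < 1 \<longrightarrow> cmod (complex_of_real (\<sigma>*(1-s\<^sup>2)) + p * complex_of_real s) < cmod (1 + q * complex_of_real s)"
  shows "\<sigma> * Re p \<le> Re q"
proof (rule ccontr)
  assume nt: "\<not> \<sigma> * Re p \<le> Re q"
  define D where "D = \<sigma> * Re p - Re q"
  have D: "D > 0" using nt D_def by simp
  define K where "K = 2 + \<bar>Re p\<bar> + (Re q)\<^sup>2 + (Im q)\<^sup>2"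
  have K: "K \<ge> 2" unfolding K_def by simp
  define s where "s = min (1/2) (D/(2*K))"
  have s0: "0 < s" "s < 1" using D K unfolding s_def by auto
  have "s \<le> D/(2*K)" unfolding s_def by simp
  then have "s * K \<le> D/(2*K) * K" using K by (intro mult_right_mono) auto
  also have "\<dots> = D/2" using K by (simp add: field_simps)
  finally have sK: "s * K \<le> D/2" .
  have "cmod (complex_of_real (\<sigma>*(1-s\<^sup>2)) + p * complex_of_real s) < cmod (1 + q * complex_of_real s)"
    using H s0 by blast
  then have "(cmod (complex_of_real (\<sigma>*(1-s\<^sup>2)) + p * complex_of_real s))\<^sup>2 < (cmod (1 + q * complex_of_real s))\<^sup>2"
    by (simp add: power_strict_mono)
  then have I: "(\<sigma>*(1-s\<^sup>2) + s * Re p)\<^sup>2 + (s * Im p)\<^sup>2 < (1 + s * Re q)\<^sup>2 + (s * Im q)\<^sup>2"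
    by (simp add: cmod_power2 mult.commute)
  have L: "(\<sigma>*(1-s\<^sup>2) + s * Re p)\<^sup>2 = \<sigma>\<^sup>2*(1-s\<^sup>2)\<^sup>2 + 2*s*(\<sigma>*Re p) - 2*s^3*(\<sigma>*Re p) + s\<^sup>2*(Re p)\<^sup>2"
    by (simp add: power2_eq_square power3_eq_cube algebra_simps)
  have "(1-s\<^sup>2)\<^sup>2 = 1 - 2*s\<^sup>2 + (s\<^sup>2)\<^sup>2" by (simp add: power2_eq_square algebra_simps)
  then have L2: "(1-s\<^sup>2)\<^sup>2 \<ge> 1 - 2*s\<^sup>2" by simp
  have R: "(1 + s * Re q)\<^sup>2 + (s * Im q)\<^sup>2 = 1 + 2*s*Re q + s\<^sup>2*((Re q)\<^sup>2 + (Im q)\<^sup>2)"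
    by (simp add: power2_eq_square algebra_simps)
  have "1 - 2*s\<^sup>2 + 2*s*(\<sigma>*Re p) - 2*s^3*(\<sigma>*Re p) < 1 + 2*s*Re q + s\<^sup>2*((Re q)\<^sup>2 + (Im q)\<^sup>2)"
  proof -
    have L': "(\<sigma>*(1-s\<^sup>2) + s * Re p)\<^sup>2 = (1-s\<^sup>2)\<^sup>2 + 2*s*(\<sigma>*Re p) - 2*s^3*(\<sigma>*Re p) + s\<^sup>2*(Re p)\<^sup>2"
      using L sg by simp
    have "s\<^sup>2*(Re p)\<^sup>2 \<ge> 0" "(s * Im p)\<^sup>2 \<ge> 0" by simp_all
    then show ?thesis using I L' L2 R by linarith
  qed
  then have "2*s*D < 2*s\<^sup>2 + 2*s^3*(\<sigma>*Re p) + s\<^sup>2*((Re q)\<^sup>2 + (Im q)\<^sup>2)"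
    unfolding D_def by (simp add: algebra_simps)
  then have "s*(2*D) < s*(2*s + 2*s\<^sup>2*(\<sigma>*Re p) + s*((Re q)\<^sup>2 + (Im q)\<^sup>2))"
    by (simp add: power2_eq_square power3_eq_cube algebra_simps)
  then have D1: "2*D < 2*s + 2*s\<^sup>2*(\<sigma>*Re p) + s*((Re q)\<^sup>2 + (Im q)\<^sup>2)"
    using s0 by simp
  have "\<bar>\<sigma>\<bar> = 1" using sg by (metis abs_power2 abs_one power2_eq_1_iff abs_of_nonneg zero_le_one abs_minus_cancel)
  then have "\<bar>\<sigma>*Re p\<bar> = \<bar>Re p\<bar>" by (simp add: abs_mult)
  then have "\<sigma>*Re p \<le> \<bar>Re p\<bar>" by linarith
  moreover have "s\<^sup>2 \<le> s" using s0 by (simp add: power2_eq_square mult_le_cancel_right1 less_imp_le)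
  ultimately have "s\<^sup>2*(\<sigma>*Re p) \<le> s * \<bar>Re p\<bar>"
  proof -
    assume a: "\<sigma>*Re p \<le> \<bar>Re p\<bar>" "s\<^sup>2 \<le> s"
    have "s\<^sup>2*(\<sigma>*Re p) \<le> s\<^sup>2 * \<bar>Re p\<bar>" using a(1) by (intro mult_left_mono) auto
    also have "\<dots> \<le> s * \<bar>Re p\<bar>" using a(2) by (intro mult_right_mono) auto
    finally show ?thesis .
  qed
  moreover have "s*((Re q)\<^sup>2 + (Im q)\<^sup>2) \<ge> 0" using s0 by simp
  ultimately have "2*D < 2*(s * K)"
  proof -
    assume a: "s\<^sup>2*(\<sigma>*Re p) \<le> s * \<bar>Re p\<bar>" "s*((Re q)\<^sup>2 + (Im q)\<^sup>2) \<ge> 0"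
    have "2*(s*K) = 4*s + 2*(s*\<bar>Re p\<bar>) + 2*(s*((Re q)\<^sup>2 + (Im q)\<^sup>2))"
      unfolding K_def by (simp add: algebra_simps)
    then show ?thesis using a D1 s0 by linarith
  qed
  then show False using sK D by simp
qed

lemma alpha_gamma:
  fixes \<alpha> \<gamma> :: complex
  assumes H: "\<And>x y. (cmod x)\<^sup>2 + (cmod y)\<^sup>2 < 1 \<Longrightarrow> cmod (x + \<alpha>*y) < cmod (1 + \<gamma>*y)"
  shows "\<alpha> = 0 \<and> \<gamma> = 0"
proof -
  have G: "\<sigma> * Re (\<alpha>*u) \<le> Re (\<gamma>*u)" if sg: "\<sigma>\<^sup>2 = 1" and u: "cmod u = 1" for \<sigma> :: real and u
  proof (rule key[OF sg], intro allI impI)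
    fix s :: real assume s: "0 < s \<and> s < 1"
    have x2: "(cmod (complex_of_real (\<sigma>*(1-s\<^sup>2))))\<^sup>2 = (1-s\<^sup>2)\<^sup>2"
      by (simp only: norm_of_real power2_abs) (simp add: power_mult_distrib sg)
    have y2: "(cmod (u * complex_of_real s))\<^sup>2 = s\<^sup>2" by (simp add: norm_mult u)
    have "s\<^sup>2 * s\<^sup>2 < s\<^sup>2 * 1" using s by (intro mult_strict_left_mono) (auto simp: power_less_one_iff)
    then have "(1-s\<^sup>2)\<^sup>2 + s\<^sup>2 < 1" by (simp add: power2_eq_square algebra_simps)
    then have "cmod (complex_of_real (\<sigma>*(1-s\<^sup>2)) + \<alpha> * (u * complex_of_real s)) < cmod (1 + \<gamma> * (u * complex_of_real s))"
      using H x2 y2 by simp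
    then show "cmod (complex_of_real (\<sigma>*(1-s\<^sup>2)) + \<alpha> * u * complex_of_real s) < cmod (1 + \<gamma> * u * complex_of_real s)"
      by (simp add: mult.assoc)
  qed
  have a1: "Re \<alpha> \<le> Re \<gamma>" using G[of 1 1] by simp
  have a2: "- Re \<alpha> \<le> Re \<gamma>" using G[of "-1" 1] by simp
  have a3: "- Re \<alpha> \<le> - Re \<gamma>" using G[of 1 "-1"] by simp
  have a4: "Re \<alpha> \<le> - Re \<gamma>" using G[of "-1" "-1"] by simp
  have b1: "- Im \<alpha> \<le> - Im \<gamma>" using G[of 1 "\<i>"] by simp
  have b2: "Im \<alpha> \<le> - Im \<gamma>" using G[of "-1" "\<i>"] by simp
  have b3: "Im \<alpha> \<le> Im \<gamma>" using G[of 1 "-\<i>"] by simp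
  have b4: "- Im \<alpha> \<le> Im \<gamma>" using G[of "-1" "-\<i>"] by simp
  have "Re \<alpha> = 0" "Re \<gamma> = 0" "Im \<alpha> = 0" "Im \<gamma> = 0" using a1 a2 a3 a4 b1 b2 b3 b4 by linarith+
  then show ?thesis by (simp add: complex_eq_iff)
qed

lemma div_eq_nz: "(X::complex) / Y = l \<Longrightarrow> l \<noteq> 0 \<Longrightarrow> Y \<noteq> 0 \<and> X = l * Y"
  by (cases "Y = 0") (auto simp: field_simps)

theorem proposition1:
  fixes N :: nat and \<tau> :: "(nat \<Rightarrow> complex) \<Rightarrow> (nat \<Rightarrow> complex)"
  assumes "N > 1"
    and "lf_selfmap N \<tau>"
    and "\<forall>lam::complex. cmod lam = 1 \<longrightarrow> \<tau> (\<lambda>i. lam * e1 i) = (\<lambda>i. lam * e1 i)"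
  shows "\<exists>A' :: nat \<Rightarrow> nat \<Rightarrow> complex. \<forall>z\<in>unit_ballN N.
           \<tau> z = (\<lambda>i. if i = 0 then z 0
                      else if i < N then (\<Sum>j\<in>{1..<N}. A' i j * z j) else 0)"
proof -
  obtain A B C d where tau: "\<tau> = lft N A B C d"
    and den: "\<forall>z\<in>unit_ballN N. cinner N z C + d \<noteq> 0"
    and maps: "\<forall>z\<in>unit_ballN N. \<tau> z \<in> unit_ballN N"
    using assms(2) unfolding lf_selfmap_def by blast
  have N0: "0 < N" using assms(1) by simp
  have fix_l: "(l * A i 0 + B i) / (l * cnj (C 0) + d) = l * e1 i" if l: "cmod l = 1" and i: "i < N" for l i
  proof -
    have "\<tau> (\<lambda>i. l * e1 i) = (\<lambda>i. l * e1 i)" using assms(3) l by blast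
    then have "lft N A B C d (\<lambda>i. l * e1 i) i = l * e1 i" using tau by metis
    then show ?thesis using i N0 by (simp add: lft_def sum_e1 cinner_e1)
  qed
  have eq0: "l * A 0 0 + B 0 = l * (l * cnj (C 0) + d)" if "cmod l = 1" for l
  proof -
    have "l \<noteq> 0" using that by auto
    then show ?thesis using div_eq_nz[OF fix_l[OF that N0]] by (simp add: e1_def)
  qed
  have E1: "A 0 0 + B 0 = cnj (C 0) + d" using eq0[of 1] by simp
  have E2: "- A 0 0 + B 0 = cnj (C 0) - d" using eq0[of "-1"] by (simp add: algebra_simps)
  have E3: "\<i> * A 0 0 + B 0 = - cnj (C 0) + \<i> * d" using eq0[of "\<i>"] by (simp add: algebra_simps)
  have E4: "- \<i> * A 0 0 + B 0 = - cnj (C 0) - \<i> * d" using eq0[of "-\<i>"] by (simp add: algebra_simps)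
  have "2 * B 0 = (A 0 0 + B 0) + (- A 0 0 + B 0)" by simp
  also have "\<dots> = 2 * cnj (C 0)" using E1 E2 by simp
  finally have F1: "2 * B 0 = 2 * cnj (C 0)" .
  have "2 * B 0 = (\<i> * A 0 0 + B 0) + (- \<i> * A 0 0 + B 0)" by simp
  also have "\<dots> = - 2 * cnj (C 0)" using E3 E4 by simp
  finally have F2: "2 * B 0 = - 2 * cnj (C 0)" .
  note F1 F2
  have c0: "cnj (C 0) = 0" and B0: "B 0 = 0" using F1 F2 by auto
  have A00: "A 0 0 = d" using E1 c0 B0 by simp
  have d0: "d \<noteq> 0"
    using div_eq_nz[OF fix_l[of 1 0]] N0 c0 by (simp add: e1_def)
  have Ai0: "A i 0 = 0 \<and> B i = 0" if "0 < i" "i < N" for i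
  proof -
    have "(A i 0 + B i) / d = 0" using fix_l[of 1 i] that c0 by (simp add: e1_def)
    moreover have "(- A i 0 + B i) / d = 0" using fix_l[of "-1" i] that c0 by (simp add: e1_def)
    ultimately have h1: "A i 0 + B i = 0" and h2: "- A i 0 + B i = 0" using d0 by simp_all
    have "2 * B i = (A i 0 + B i) + (- A i 0 + B i)" by simp
    then have "B i = 0" using h1 h2 by simp
    then show ?thesis using h1 by simp
  qed
  have rowk: "A 0 k = 0 \<and> C k = 0" if k: "0 < k" "k < N" for k
  proof -
    define \<alpha> where "\<alpha> = A 0 k / d"
    define \<gamma> where "\<gamma> = cnj (C k) / d"
    have "cmod (x + \<alpha>*y) < cmod (1 + \<gamma>*y)" if xy: "(cmod x)\<^sup>2 + (cmod y)\<^sup>2 < 1" for x y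
    proof -
      define z where "z = (\<lambda>j. if j = 0 then x else if j = k then y else (0::complex))"
      have zin: "z \<in> unit_ballN N" unfolding unit_ballN_def z_def using norm_pt[OF k, of x y] xy k by auto
      have "\<tau> z \<in> unit_ballN N" using maps zin by blast
      then have "(\<Sum>j<N. (cmod (\<tau> z j))\<^sup>2) < 1" unfolding unit_ballN_def by blast
      moreover have "(cmod (\<tau> z 0))\<^sup>2 \<le> (\<Sum>j<N. (cmod (\<tau> z j))\<^sup>2)" using N0 by (intro member_le_sum) auto
      ultimately have "(cmod (\<tau> z 0))\<^sup>2 < 1" by linarith
      then have lt: "cmod (\<tau> z 0) < 1" using abs_square_less_1[of "cmod (\<tau> z 0)"] by simp
      have dn: "x * cnj (C 0) + y * cnj (C k) + d \<noteq> 0" using den zin cinner_pt[OF k, of x y C] unfolding z_def by metis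
      then have dn': "1 + \<gamma> * y \<noteq> 0" using c0 d0 by (simp add: \<gamma>_def field_simps)
      have tz: "\<tau> z 0 = (A 0 0 * x + A 0 k * y + B 0) / (x * cnj (C 0) + y * cnj (C k) + d)"
        using N0 by (simp add: tau lft_def z_def sum_pt[OF k] cinner_pt[OF k])
      have nu: "A 0 0 * x + A 0 k * y + B 0 = d * (x + \<alpha> * y)" using A00 B0 d0 by (simp add: \<alpha>_def field_simps)
      have de: "x * cnj (C 0) + y * cnj (C k) + d = d * (1 + \<gamma> * y)" using c0 d0 by (simp add: \<gamma>_def field_simps)
      have "\<tau> z 0 = (x + \<alpha> * y) / (1 + \<gamma> * y)" using tz nu de d0 by simp
      then have "cmod (x + \<alpha> * y) / cmod (1 + \<gamma> * y) < 1" using lt by (simp add: norm_divide)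
      then show ?thesis using dn' by (simp add: divide_less_eq)
    qed
    then have "\<alpha> = 0 \<and> \<gamma> = 0" by (rule alpha_gamma)
    then show ?thesis using d0 by (simp add: \<alpha>_def \<gamma>_def)
  qed
  show ?thesis
  proof (intro exI[of _ "\<lambda>i j. A i j / d"] ballI)
    fix z assume z: "z \<in> unit_ballN N"
    have cz: "z j * cnj (C j) = 0" if "j < N" for j
      using that c0 rowk[of j] by (cases "j = 0") auto
    have den_z: "cinner N z C = 0" unfolding cinner_def using cz by (intro sum.neutral) auto
    have split: "{..<N} = insert 0 {1..<N}" using N0 by auto
    show "\<tau> z = (\<lambda>i. if i = 0 then z 0
                      else if i < N then (\<Sum>j\<in>{1..<N}. A i j / d * z j) else 0)"
    proof
      fix i
      consider "i = 0" | "0 < i \<and> i < N" | "N \<le> i" by linarith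
      then show "\<tau> z i = (if i = 0 then z 0
                      else if i < N then (\<Sum>j\<in>{1..<N}. A i j / d * z j) else 0)"
      proof cases
        case 1
        have "(\<Sum>j<N. A 0 j * z j) = A 0 0 * z 0 + (\<Sum>j\<in>{1..<N}. A 0 j * z j)"
          unfolding split by simp
        also have "(\<Sum>j\<in>{1..<N}. A 0 j * z j) = 0" using rowk by simp
        finally have "(\<Sum>j<N. A 0 j * z j) = d * z 0" using A00 by simp
        then show ?thesis using 1 N0 den_z B0 d0 by (simp add: tau lft_def)
      next
        case 2
        have "(\<Sum>j<N. A i j * z j) = A i 0 * z 0 + (\<Sum>j\<in>{1..<N}. A i j * z j)"
          unfolding split by simp
        then have "(\<Sum>j<N. A i j * z j) = (\<Sum>j\<in>{1..<N}. A i j * z j)" using Ai0[of i] 2 by simp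
        then show ?thesis using 2 den_z Ai0[of i] d0
          by (simp add: tau lft_def sum_divide_distrib)
      next
        case 3
        then show ?thesis using assms(1) by (simp add: tau lft_def)
      qed
    qed
  qed
qed

end
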